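(* Let $(Z,\to)$, $R$ and $H$ be as in the context. Then (i) $H=\mathrm{Aut}(Z,R)$; and (ii) the structure $(Z,R)$ is homogeneous, i.e. every isomorphism between finite substructures of $(Z,R)$ extends to an automorphism of $(Z,R)$.
   Context: Let $Z$ be a countable dense subset of the unit circle containing no two antipodal points, and for distinct $x,y\in Z$ put $x\to y$ iff the clockwise distance from $x$ to $y$ along the circle is less than the anticlockwise distance (this tournament is the countable dense local order). Define a ternary relation $R$ on $Z$ by $R(x;y,z)$ iff $(y\to x\wedge y\to z\wedge x\to z)\vee(z\to x\wedge z\to y\wedge x\to y)$. Let $H$ be the group of all permutations $g$ of $Z$ that either preserve $\to$ (automorphisms) or reverse it (i.e. $x\to y$ iff $y^g\to x^g$ for all distinct $x,y$). *)

theory Defs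
  imports "HOL-Analysis.Analysis"
begin

text \<open>Points of the unit circle are unit complex numbers. Anticlockwise = positive
  direction (multiplication by cis t, t > 0); clockwise = negative direction.\<close>

definition cw_dist :: "complex \<Rightarrow> complex \<Rightarrow> real" where
  "cw_dist x y = (THE t. 0 \<le> t \<and> t < 2 * pi \<and> y = x * cis (- t))"

definition acw_dist :: "complex \<Rightarrow> complex \<Rightarrow> real" where
  "acw_dist x y = (THE t. 0 \<le> t \<and> t < 2 * pi \<and> y = x * cis t)"

definition larrow :: "complex \<Rightarrow> complex \<Rightarrow> bool" where
  "larrow x y \<longleftrightarrow> x \<noteq> y \<and> cw_dist x y < acw_dist x y"

definition Rrel :: "complex \<Rightarrow> complex \<Rightarrow> complex \<Rightarrow> bool" where
  "Rrel x y z \<longleftrightarrow>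
     (larrow y x \<and> larrow y z \<and> larrow x z) \<or> (larrow z x \<and> larrow z y \<and> larrow x y)"

definition in_H :: "complex set \<Rightarrow> (complex \<Rightarrow> complex) \<Rightarrow> bool" where
  "in_H Z g \<longleftrightarrow> bij_betw g Z Z \<and>
     ((\<forall>x\<in>Z. \<forall>y\<in>Z. x \<noteq> y \<longrightarrow> (larrow x y \<longleftrightarrow> larrow (g x) (g y))) \<or>
      (\<forall>x\<in>Z. \<forall>y\<in>Z. x \<noteq> y \<longrightarrow> (larrow x y \<longleftrightarrow> larrow (g y) (g x))))"

definition autR :: "complex set \<Rightarrow> (complex \<Rightarrow> complex) \<Rightarrow> bool" where
  "autR Z g \<longleftrightarrow> bij_betw g Z Z \<and>
     (\<forall>x\<in>Z. \<forall>y\<in>Z. \<forall>z\<in>Z. Rrel x y z \<longleftrightarrow> Rrel (g x) (g y) (g z))"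

end

theory Submission
  imports Defs
begin

definition cr :: "complex \<Rightarrow> complex \<Rightarrow> real" where
  "cr x y = Im (x * cnj y)"

lemma uc: "norm x = 1 \<Longrightarrow> x * cnj x = 1"
  using complex_norm_square[of x] by simp

lemma unit_div:
  assumes "norm x = 1"
  shows "(y = x * c) \<longleftrightarrow> (c = y * cnj x)"
proof
  assume "y = x * c"
  then have "y * cnj x = c * (x * cnj x)" by (simp add: ac_simps)
  then show "c = y * cnj x" using uc[OF assms] by simp
next
  assume "c = y * cnj x"
  then have "x * c = y * (x * cnj x)" by (simp add: ac_simps)
  then show "y = x * c" using uc[OF assms] by simp
qed

lemma the_arg:
  assumes "norm u = 1"
  shows "(THE t. 0 \<le> t \<and> t < 2 * pi \<and> cis t = u) = Arg2pi u"
proof (rule the_equality)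
  show "0 \<le> Arg2pi u \<and> Arg2pi u < 2 * pi \<and> cis (Arg2pi u) = u"
    using Arg2pi_ge_0 Arg2pi_lt_2pi complex_norm_eq_1_exp[of u] assms
    by (simp add: cis_conv_exp)
next
  fix t assume "0 \<le> t \<and> t < 2 * pi \<and> cis t = u"
  then show "t = Arg2pi u"
    using Arg2pi_unique[of 1 t u] by (simp add: cis_conv_exp)
qed

lemma acw_eq:
  assumes "norm x = 1" "norm y = 1"
  shows "acw_dist x y = Arg2pi (y * cnj x)"
proof -
  have "\<And>t. (y = x * cis t) = (cis t = y * cnj x)"
  proof -
    fix t
    show "(y = x * cis t) = (cis t = y * cnj x)"
      using unit_div[OF assms(1)] by blast
  qed
  moreover have "norm (y * cnj x) = 1" using assms by (simp add: norm_mult)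
  ultimately show ?thesis unfolding acw_dist_def using the_arg by simp
qed

lemma cw_eq:
  assumes "norm x = 1" "norm y = 1"
  shows "cw_dist x y = Arg2pi (x * cnj y)"
proof -
  have "\<And>t. (y = x * cis (-t)) = (cis t = x * cnj y)"
  proof -
    fix t
    have "(y = x * cis (-t)) = (cis (-t) = y * cnj x)"
      using unit_div[OF assms(1)] by blast
    also have "\<dots> = (cnj (cis (-t)) = cnj (y * cnj x))" by (metis complex_cnj_cnj)
    also have "\<dots> = (cis t = x * cnj y)" by (simp add: cis_cnj mult.commute)
    finally show "(y = x * cis (-t)) = (cis t = x * cnj y)" .
  qed
  moreover have "norm (x * cnj y) = 1" using assms by (simp add: norm_mult)
  ultimately show ?thesis unfolding cw_dist_def using the_arg by simp
qed

lemma larrow_cr: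
  assumes "norm x = 1" "norm y = 1"
  shows "larrow x y \<longleftrightarrow> cr x y > 0"
proof -
  define u where "u = y * cnj x"
  have nu: "norm u = 1" using assms by (simp add: u_def norm_mult)
  have xu: "x * cnj y = cnj u" by (simp add: u_def)
  have inv: "cnj u = inverse u" using uc[OF nu] inverse_unique by metis
  have eq: "x = y \<longleftrightarrow> u = 1"
  proof
    assume "x = y" then show "u = 1" using uc[OF assms(2)] u_def by simp
  next
    assume "u = 1"
    then have "y * (cnj x * x) = x" unfolding u_def by (simp add: mult.assoc[symmetric])
    then show "x = y" using uc[OF assms(1)] by (simp add: mult.commute)
  qed
  have crv: "cr x y = - Im u" by (simp add: cr_def xu)
  show ?thesis
  proof (cases "u \<in> \<real>")
    case True
    then have "Im u = 0" by (simp add: complex_is_Real_iff)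
    moreover have AA: "Arg2pi (cnj u) = Arg2pi u" using True inv Arg2pi_inverse by simp
    have L: "larrow x y \<longleftrightarrow> x \<noteq> y \<and> Arg2pi (cnj u) < Arg2pi u"
      unfolding larrow_def using cw_eq[OF assms] acw_eq[OF assms] xu u_def by simp
    ultimately show ?thesis using L crv AA by simp
  next
    case False
    then have A: "Arg2pi (cnj u) = 2*pi - Arg2pi u" using inv Arg2pi_inverse by simp
    have nxy: "x \<noteq> y" using False eq by auto
    have II: "(2*pi - Arg2pi u < Arg2pi u) \<longleftrightarrow> Im u < 0"
      using Arg2pi_le_pi[of u] by auto
    have L: "larrow x y \<longleftrightarrow> x \<noteq> y \<and> Arg2pi (cnj u) < Arg2pi u"
      unfolding larrow_def using cw_eq[OF assms] acw_eq[OF assms] xu u_def by simp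
    show ?thesis using L crv A nxy II by auto
  qed
qed

lemma cr_ri: "cr x y = Im x * Re y - Re x * Im y"
  by (simp add: cr_def)

lemma unit_ri: "norm x = 1 \<Longrightarrow> (Re x)^2 + (Im x)^2 = 1"
  using cmod_power2[of x] by simp

lemma cr_anti: "cr y x = - cr x y" by (simp add: cr_ri)

lemma cr_self: "cr x x = 0" by (simp add: cr_ri)

lemma cr_scale: "cr (complex_of_real r * x) (complex_of_real s * y) = r * s * cr x y"
  by (simp add: cr_ri algebra_simps)

lemma cr_cnj: "cr (cnj x) (cnj y) = cr y x" by (simp add: cr_ri)

lemma cr_rot: "norm u = 1 \<Longrightarrow> cr (x * u) (y * u) = cr x y"
proof -
  assume "norm u = 1"
  then have "u * cnj u = 1" by (rule uc)
  then have "x * u * cnj (y * u) = x * cnj y * (u * cnj u)" by (simp add: ac_simps)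
  then have "x * u * cnj (y * u) = x * cnj y" using \<open>u * cnj u = 1\<close> by simp
  then show ?thesis by (simp only: cr_def)
qed

lemma cr_zero:
  assumes "norm x = 1" "norm y = 1" "cr x y = 0"
  shows "x = y \<or> x = - y"
proof -
  define w where "w = x * cnj y"
  have nw: "norm w = 1" using assms by (simp add: w_def norm_mult)
  have iw: "Im w = 0" using assms(3) by (simp add: cr_def w_def)
  have "(Re w)^2 = 1" using unit_ri[OF nw] iw by simp
  then have "Re w = 1 \<or> Re w = -1" by (simp add: power2_eq_1_iff)
  then have w: "w = 1 \<or> w = -1" using iw by (auto simp: complex_eq_iff)
  have "w * y = x * (y * cnj y)" by (simp add: w_def ac_simps)
  then have "w * y = x" using uc[OF assms(2)] by simp
  then show ?thesis using w by auto
qed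

lemma key_identity:
  "cr u v * (Im u + Im v) = (Re v - Re u) * (1 + Re u * Re v + Im u * Im v)"
  if "norm u = 1" "norm v = 1" for u v
proof -
  have a: "(Im u)^2 = 1 - (Re u)^2" using unit_ri[OF that(1)] by simp
  have b: "(Im v)^2 = 1 - (Re v)^2" using unit_ri[OF that(2)] by simp
  have "cr u v * (Im u + Im v) = (Im u)^2 * Re v + Im u * Im v * Re v - Re u * Im u * Im v - Re u * (Im v)^2"
    by (simp add: cr_ri algebra_simps power2_eq_square)
  also have "\<dots> = (Re v - Re u) * (1 + Re u * Re v + Im u * Im v)"
    unfolding a b by (simp add: algebra_simps power2_eq_square)
  finally show ?thesis .
qed

lemma upper_factor_pos:
  assumes "norm u = 1" "norm v = 1" "Im u > 0" "Im v > 0"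
  shows "1 + Re u * Re v + Im u * Im v > 0"
proof -
  have "(Re u)^2 \<le> 1" "(Re v)^2 \<le> 1" using unit_ri[OF assms(1)] unit_ri[OF assms(2)]
    by (smt (verit) zero_le_power2)+
  then have "\<bar>Re u\<bar> \<le> 1" "\<bar>Re v\<bar> \<le> 1" by (simp_all add: abs_square_le_1)
  then have "\<bar>Re u * Re v\<bar> \<le> 1" by (simp add: abs_mult mult_le_one)
  moreover have "Im u * Im v > 0" using assms by simp
  ultimately show ?thesis by linarith
qed

lemma upper_cr:
  assumes "norm u = 1" "norm v = 1" "Im u > 0" "Im v > 0"
  shows "(cr u v > 0 \<longleftrightarrow> Re u < Re v) \<and> (cr u v = 0 \<longleftrightarrow> Re u = Re v)"
proof -
  have f: "1 + Re u * Re v + Im u * Im v > 0" by (rule upper_factor_pos[OF assms])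
  have s: "Im u + Im v > 0" using assms by simp
  have e: "cr u v * (Im u + Im v) = (Re v - Re u) * (1 + Re u * Re v + Im u * Im v)"
    by (rule key_identity[OF assms(1,2)])
  have "cr u v > 0 \<longleftrightarrow> cr u v * (Im u + Im v) > 0" using s by (simp add: zero_less_mult_iff)
  also have "\<dots> \<longleftrightarrow> Re u < Re v" using e f by (simp add: zero_less_mult_iff)
  finally have 1: "cr u v > 0 \<longleftrightarrow> Re u < Re v" .
  have "cr u v = 0 \<longleftrightarrow> cr u v * (Im u + Im v) = 0" using s by simp
  also have "\<dots> \<longleftrightarrow> Re u = Re v" using e f by auto
  finally show ?thesis using 1 by simp
qed

lemma dlo:
  fixes P :: "(real \<times> real) set"
  assumes fin: "finite P"
    and mono: "\<forall>(r,s)\<in>P. \<forall>(r',s')\<in>P. r < r' \<longleftrightarrow> s < s'"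
    and rng: "\<forall>(r,s)\<in>P. -1 < s \<and> s < 1"
    and nx: "\<forall>(r,s)\<in>P. r \<noteq> x"
  shows "\<exists>t. -1 < t \<and> t < 1 \<and> (\<forall>(r,s)\<in>P. (r < x \<longleftrightarrow> s < t) \<and> s \<noteq> t)"
proof -
  define L where "L = insert (-1) (snd ` {p\<in>P. fst p < x})"
  define U where "U = insert 1 (snd ` {p\<in>P. fst p > x})"
  have fL: "finite L" "L \<noteq> {}" using fin by (auto simp: L_def)
  have fU: "finite U" "U \<noteq> {}" using fin by (auto simp: U_def)
  have LU: "\<forall>a\<in>L. \<forall>b\<in>U. a < b"
  proof (intro ballI)
    fix a b assume a: "a \<in> L" and b: "b \<in> U"
    show "a < b"
    proof (cases "a = -1")
      case True
      then show ?thesis using b rng by (auto simp: U_def)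
    next
      case False
      then obtain r where ra: "(r,a) \<in> P" "r < x" using a by (auto simp: L_def)
      show ?thesis
      proof (cases "b = 1")
        case True then show ?thesis using ra rng by auto
      next
        case False
        then obtain r' where rb: "(r',b) \<in> P" "r' > x" using b by (auto simp: U_def)
        have "r < r'" using ra rb by simp
        then show ?thesis using mono ra rb by fastforce
      qed
    qed
  qed
  define lo where "lo = Max L"
  define hi where "hi = Min U"
  have lohi: "lo < hi"
    unfolding lo_def hi_def using LU fL fU by (simp add: Max_less_iff Min_gr_iff)
  have lo1: "-1 \<le> lo" unfolding lo_def using fL by (simp add: L_def)
  have hi1: "hi \<le> 1" unfolding hi_def using fU by (simp add: U_def)
  define t where "t = (lo + hi) / 2"
  have "\<forall>(r,s)\<in>P. (r < x \<longleftrightarrow> s < t) \<and> s \<noteq> t"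
  proof (intro ballI, clarify)
    fix r s assume rs: "(r,s) \<in> P"
    show "(r < x \<longleftrightarrow> s < t) \<and> s \<noteq> t"
    proof (cases "r < x")
      case True
      then have "s \<in> L" using rs by (force simp: L_def)
      then have "s \<le> lo" unfolding lo_def using fL by simp
      then show ?thesis using True lohi t_def by simp
    next
      case False
      then have "r > x" using rs nx by force
      then have "s \<in> U" using rs by (force simp: U_def)
      then have "hi \<le> s" unfolding hi_def using fU by simp
      then show ?thesis using False lohi t_def by simp
    qed
  qed
  then show ?thesis using lo1 hi1 lohi t_def by (intro exI[of _ t]) auto
qed

definition sg :: "complex \<Rightarrow> real" where "sg x = (if Im x > 0 then 1 else -1)"
definition vv :: "complex \<Rightarrow> complex" where "vv x = complex_of_real (sg x) * x"
definition ph :: "complex \<Rightarrow> real" where "ph x = Re (vv x)"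

lemma sg_sq: "sg x * sg x = 1" by (simp add: sg_def)
lemma sg_nz: "sg x \<noteq> 0" by (simp add: sg_def)

lemma vv_props:
  assumes "norm x = 1" "Im x \<noteq> 0"
  shows "Im (vv x) > 0" "norm (vv x) = 1" "x = complex_of_real (sg x) * vv x"
    "ph x = sg x * Re x"
proof -
  show "Im (vv x) > 0" using assms by (auto simp: vv_def sg_def)
  show "norm (vv x) = 1" using assms by (simp add: vv_def sg_def norm_mult)
  have "complex_of_real (sg x) * vv x = complex_of_real (sg x * sg x) * x"
    by (simp add: vv_def)
  then show "x = complex_of_real (sg x) * vv x" by (simp add: sg_sq)
  show "ph x = sg x * Re x" by (simp add: ph_def vv_def)
qed

lemma sgn_upper:
  assumes "norm u = 1" "norm v = 1" "Im u > 0" "Im v > 0"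
  shows "sgn (cr u v) = sgn (Re v - Re u)"
  using upper_cr[OF assms] by (auto simp: sgn_if)

lemma sgn_cr:
  assumes "norm x = 1" "norm y = 1" "Im x \<noteq> 0" "Im y \<noteq> 0"
  shows "sgn (cr x y) = sg x * sg y * sgn (ph y - ph x)"
proof -
  have "cr x y = cr (complex_of_real (sg x) * vv x) (complex_of_real (sg y) * vv y)"
    using vv_props(3)[OF assms(1,3)] vv_props(3)[OF assms(2,4)] by (rule arg_cong2)
  also have "\<dots> = sg x * sg y * cr (vv x) (vv y)" by (rule cr_scale)
  finally have e: "cr x y = sg x * sg y * cr (vv x) (vv y)" .
  have "sgn (cr (vv x) (vv y)) = sgn (ph y - ph x)"
    unfolding ph_def
    by (rule sgn_upper) (use vv_props assms in auto)
  moreover have "sgn (sg x * sg y) = sg x * sg y" by (simp add: sg_def)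
  ultimately show ?thesis using e by (simp add: sgn_mult)
qed

lemma sgn_eq_pos: "(a > 0 \<longleftrightarrow> b > 0) \<Longrightarrow> (a::real) \<noteq> 0 \<Longrightarrow> b \<noteq> 0 \<Longrightarrow> sgn a = sgn b"
  by (auto simp: sgn_if)

lemma sgn_eq_imp: "sgn (a::real) = sgn b \<Longrightarrow> (a > 0 \<longleftrightarrow> b > 0) \<and> (a = 0 \<longleftrightarrow> b = 0)"
  by (auto simp: sgn_if split: if_splits)

lemma core1:
  assumes fin: "finite S" and one: "(1,1) \<in> S"
    and un': "\<And>a b. (a,b) \<in> S \<Longrightarrow> norm a = 1 \<and> norm b = 1"
    and nz': "\<And>a b c d. (a,b) \<in> S \<Longrightarrow> (c,d) \<in> S \<Longrightarrow> (a,b) \<noteq> (c,d) \<Longrightarrow> cr a c \<noteq> 0 \<and> cr b d \<noteq> 0"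
    and pr': "\<And>a b c d. (a,b) \<in> S \<Longrightarrow> (c,d) \<in> S \<Longrightarrow> cr a c > 0 \<longleftrightarrow> cr b d > 0"
    and nzz: "norm z = 1"
    and nzz': "\<And>a b. (a,b) \<in> S \<Longrightarrow> cr z a \<noteq> 0"
  shows "\<exists>p. norm p = 1 \<and> (\<forall>a b. (a,b) \<in> S \<longrightarrow> (cr p b > 0 \<longleftrightarrow> cr z a > 0) \<and> cr p b \<noteq> 0)"
proof -
  define S' where "S' = S - {(1,1)}"
  have c1: "cr x 1 = Im x" for x by (simp add: cr_ri)
  have imS: "Im a \<noteq> 0 \<and> Im b \<noteq> 0 \<and> sg a = sg b \<and> norm a = 1 \<and> norm b = 1" if "(a,b) \<in> S'" for a b
  proof -
    have ab: "(a,b) \<in> S" "(a,b) \<noteq> (1,1)" using that by (auto simp: S'_def)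
    have "cr a 1 \<noteq> 0 \<and> cr b 1 \<noteq> 0" using nz'[OF ab(1) one ab(2)] .
    moreover have "cr a 1 > 0 \<longleftrightarrow> cr b 1 > 0" using pr'[OF ab(1) one] .
    ultimately show ?thesis using un'[OF ab(1)] by (auto simp: c1 sg_def)
  qed
  have imz: "Im z \<noteq> 0" using nzz'[OF one] c1 by simp
  define P where "P = (\<lambda>(a,b). (ph a, ph b)) ` S'"
  have finP: "finite P" using fin by (simp add: P_def S'_def)
  have mono: "\<forall>(r,s)\<in>P. \<forall>(r',s')\<in>P. r < r' \<longleftrightarrow> s < s'"
  proof (clarsimp simp: P_def)
    fix a b c d assume ab: "(a,b) \<in> S'" and cd: "(c,d) \<in> S'"
    show "ph a < ph c \<longleftrightarrow> ph b < ph d"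
    proof (cases "(a,b) = (c,d)")
      case True then show ?thesis by simp
    next
      case False
      have abS: "(a,b) \<in> S" "(c,d) \<in> S" using ab cd by (auto simp: S'_def)
      have "sgn (cr a c) = sgn (cr b d)"
        using sgn_eq_pos pr'[OF abS] nz'[OF abS False] by blast
      moreover have "sgn (cr a c) = sg a * sg c * sgn (ph c - ph a)"
        using sgn_cr imS[OF ab] imS[OF cd] by simp
      moreover have "sgn (cr b d) = sg a * sg c * sgn (ph d - ph b)"
        using sgn_cr imS[OF ab] imS[OF cd] by simp
      ultimately have "sgn (ph c - ph a) = sgn (ph d - ph b)"
        using sg_nz by simp
      then have "(ph c - ph a > 0) \<longleftrightarrow> (ph d - ph b > 0)" using sgn_eq_imp by blast
      then show ?thesis by simp
    qed
  qed
  have rng: "\<forall>(r,s)\<in>P. -1 < s \<and> s < 1"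
  proof (clarsimp simp: P_def)
    fix a b assume ab: "(a,b) \<in> S'"
    have "(Re b)^2 < 1" using unit_ri[of b] imS[OF ab]
      by (smt (verit) zero_less_power2)
    then have "\<bar>Re b\<bar> < 1" by (simp add: abs_square_less_1)
    moreover have "ph b = sg b * Re b" using vv_props(4) imS[OF ab] by simp
    ultimately show "-1 < ph b \<and> ph b < 1" by (auto simp: sg_def)
  qed
  have nx: "\<forall>(r,s)\<in>P. r \<noteq> ph z"
  proof (clarsimp simp: P_def)
    fix a b assume ab: "(a,b) \<in> S'" and eq: "ph a = ph z"
    have "cr z a \<noteq> 0" using nzz' ab by (auto simp: S'_def)
    moreover have "sgn (cr z a) = sg z * sg a * sgn (ph a - ph z)"
      using sgn_cr imS[OF ab] imz nzz by simp
    ultimately show False using eq by (simp add: sgn_0_0)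
  qed
  obtain t where t: "-1 < t" "t < 1" "\<forall>(r,s)\<in>P. (r < ph z \<longleftrightarrow> s < t) \<and> s \<noteq> t"
    using dlo[OF finP mono rng nx] by blast
  define q where "q = Complex t (sqrt (1 - t^2))"
  have t2: "t^2 < 1" using t by (simp add: abs_square_less_1)
  have imq: "Im q > 0" using t2 by (simp add: q_def)
  have nq: "norm q = 1" using t2 by (simp add: q_def cmod_def)
  define p where "p = complex_of_real (sg z) * q"
  have np: "norm p = 1" using nq by (simp add: p_def norm_mult sg_def)
  have imp: "Im p = sg z * Im q" by (simp add: p_def)
  have imp0: "Im p \<noteq> 0" using imp imq sg_nz by simp
  have sgp: "sg p = sg z" using imp imq by (auto simp: sg_def)
  have php: "ph p = t"
    using vv_props(4)[OF np imp0] sgp by (simp add: p_def sg_def q_def)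
  have "(cr p b > 0 \<longleftrightarrow> cr z a > 0) \<and> cr p b \<noteq> 0" if ab: "(a,b) \<in> S" for a b
  proof (cases "(a,b) = (1,1)")
    case True
    then show ?thesis using imp imq imz by (auto simp: c1 sg_def)
  next
    case False
    then have ab': "(a,b) \<in> S'" using ab by (simp add: S'_def)
    have "(ph a, ph b) \<in> P" using ab' by (force simp: P_def)
    then have tt: "(ph a < ph z \<longleftrightarrow> ph b < t) \<and> ph b \<noteq> t" using t by blast
    have "ph a \<noteq> ph z" using nx \<open>(ph a, ph b) \<in> P\<close> by blast
    then have "sgn (ph b - t) = sgn (ph a - ph z)" using tt by (auto simp: sgn_if)
    moreover have "sgn (cr p b) = sg z * sg b * sgn (ph b - t)"
      using sgn_cr[OF np _ imp0] imS[OF ab'] sgp php by simp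
    moreover have "sgn (cr z a) = sg z * sg a * sgn (ph a - ph z)"
      using sgn_cr imS[OF ab'] imz nzz by simp
    ultimately have "sgn (cr p b) = sgn (cr z a)" using imS[OF ab'] by simp
    moreover have "cr z a \<noteq> 0" using nzz'[OF ab] .
    ultimately show ?thesis using sgn_eq_imp by blast
  qed
  then show ?thesis using np by blast
qed

lemma core:
  assumes fin: "finite S"
    and un': "\<And>a b. (a,b) \<in> S \<Longrightarrow> norm a = 1 \<and> norm b = 1"
    and nz': "\<And>a b c d. (a,b) \<in> S \<Longrightarrow> (c,d) \<in> S \<Longrightarrow> (a,b) \<noteq> (c,d) \<Longrightarrow> cr a c \<noteq> 0 \<and> cr b d \<noteq> 0"
    and pr': "\<And>a b c d. (a,b) \<in> S \<Longrightarrow> (c,d) \<in> S \<Longrightarrow> cr a c > 0 \<longleftrightarrow> cr b d > 0"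
    and nzz: "norm z = 1"
    and nzz': "\<And>a b. (a,b) \<in> S \<Longrightarrow> cr z a \<noteq> 0"
  shows "\<exists>p. norm p = 1 \<and> (\<forall>a b. (a,b) \<in> S \<longrightarrow> (cr p b > 0 \<longleftrightarrow> cr z a > 0) \<and> cr p b \<noteq> 0)"
proof (cases "S = {}")
  case True
  then show ?thesis by (intro exI[of _ 1]) simp
next
  case False
  then obtain a0 b0 where ab0: "(a0,b0) \<in> S" by auto
  have na0: "norm a0 = 1" and nb0: "norm b0 = 1" using un'[OF ab0] by auto
  have nca0: "norm (cnj a0) = 1" and ncb0: "norm (cnj b0) = 1" using na0 nb0 by auto
  define T where "T = (\<lambda>(a,b). (a * cnj a0, b * cnj b0)) ` S"
  have Tmem: "\<exists>a b. (a,b) \<in> S \<and> a' = a * cnj a0 \<and> b' = b * cnj b0" if "(a',b') \<in> T" for a' b'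
    using that by (auto simp: T_def)
  have crA: "cr (a * cnj a0) (c * cnj a0) = cr a c" for a c using cr_rot[OF nca0] .
  have crB: "cr (a * cnj b0) (c * cnj b0) = cr a c" for a c using cr_rot[OF ncb0] .
  have one: "(1,1) \<in> T" using ab0 uc[OF na0] uc[OF nb0] by (force simp: T_def)
  have finT: "finite T" using fin by (simp add: T_def)
  have unT: "norm a = 1 \<and> norm b = 1" if "(a,b) \<in> T" for a b
    using Tmem[OF that] un' na0 nb0 by (auto simp: norm_mult)
  have nzT: "cr a c \<noteq> 0 \<and> cr b d \<noteq> 0" if h: "(a,b) \<in> T" "(c,d) \<in> T" "(a,b) \<noteq> (c,d)" for a b c d
  proof -
    obtain a1 b1 where 1: "(a1,b1) \<in> S" "a = a1 * cnj a0" "b = b1 * cnj b0" using Tmem[OF h(1)] by blast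
    obtain c1 d1 where 2: "(c1,d1) \<in> S" "c = c1 * cnj a0" "d = d1 * cnj b0" using Tmem[OF h(2)] by blast
    have "(a1,b1) \<noteq> (c1,d1)" using h(3) 1 2 by auto
    then show ?thesis using nz'[OF 1(1) 2(1)] 1 2 crA crB by simp
  qed
  have prT: "cr a c > 0 \<longleftrightarrow> cr b d > 0" if h: "(a,b) \<in> T" "(c,d) \<in> T" for a b c d
  proof -
    obtain a1 b1 where 1: "(a1,b1) \<in> S" "a = a1 * cnj a0" "b = b1 * cnj b0" using Tmem[OF h(1)] by blast
    obtain c1 d1 where 2: "(c1,d1) \<in> S" "c = c1 * cnj a0" "d = d1 * cnj b0" using Tmem[OF h(2)] by blast
    show ?thesis using pr'[OF 1(1) 2(1)] 1 2 crA crB by simp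
  qed
  have nzT': "cr (z * cnj a0) a \<noteq> 0" if h: "(a,b) \<in> T" for a b
  proof -
    obtain a1 b1 where 1: "(a1,b1) \<in> S" "a = a1 * cnj a0" "b = b1 * cnj b0" using Tmem[OF h(1)] by blast
    show ?thesis using nzz'[OF 1(1)] 1 crA by simp
  qed
  have nz0: "norm (z * cnj a0) = 1" using nzz na0 by (simp add: norm_mult)
  have "\<exists>p'. norm p' = 1 \<and> (\<forall>a b. (a,b) \<in> T \<longrightarrow> (cr p' b > 0 \<longleftrightarrow> cr (z * cnj a0) a > 0) \<and> cr p' b \<noteq> 0)"
    using finT one unT nzT prT nz0 nzT' by (rule core1)
  then obtain p' where p': "norm p' = 1"
    "\<forall>a b. (a,b) \<in> T \<longrightarrow> (cr p' b > 0 \<longleftrightarrow> cr (z * cnj a0) a > 0) \<and> cr p' b \<noteq> 0"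
    by blast
  define p where "p = p' * b0"
  have np: "norm p = 1" using p' nb0 by (simp add: p_def norm_mult)
  have "(cr p b > 0 \<longleftrightarrow> cr z a > 0) \<and> cr p b \<noteq> 0" if ab: "(a,b) \<in> S" for a b
  proof -
    have abT: "(a * cnj a0, b * cnj b0) \<in> T" using ab by (force simp: T_def)
    have bb: "b * cnj b0 * b0 = b" using uc[OF nb0] by (simp add: mult.assoc mult.commute)
    have "cr p b = cr (p' * b0) (b * cnj b0 * b0)" by (simp only: bb p_def)
    also have "\<dots> = cr p' (b * cnj b0)" using cr_rot[OF nb0] by simp
    finally have e1: "cr p b = cr p' (b * cnj b0)" .
    have e2: "cr (z * cnj a0) (a * cnj a0) = cr z a" using crA .
    show ?thesis using p'(2) abT e1 e2 by metis
  qed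
  then show ?thesis using np by blast
qed

definition dense_set :: "complex set \<Rightarrow> bool" where
  "dense_set Z \<longleftrightarrow> Z \<subseteq> sphere 0 1 \<and> sphere 0 1 \<subseteq> closure Z \<and> (\<forall>x\<in>Z. - x \<notin> Z)"

definition good :: "(complex \<times> complex) set \<Rightarrow> bool" where
  "good S \<longleftrightarrow> (\<forall>a b c d. (a,b) \<in> S \<longrightarrow> (c,d) \<in> S \<longrightarrow> (a = c \<longleftrightarrow> b = d) \<and> (larrow a c \<longleftrightarrow> larrow b d))"

lemma good_conv: "good (converse S) \<longleftrightarrow> good S"
  unfolding good_def by auto

lemma dense_unit: "dense_set Z \<Longrightarrow> x \<in> Z \<Longrightarrow> norm x = 1"
  unfolding dense_set_def by auto

lemma dense_cr: "dense_set Z \<Longrightarrow> x \<in> Z \<Longrightarrow> y \<in> Z \<Longrightarrow> x \<noteq> y \<Longrightarrow> cr x y \<noteq> 0"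
  using cr_zero dense_unit unfolding dense_set_def by metis

lemma forth:
  assumes dZ: "dense_set Z" and dW: "dense_set W" and fin: "finite S" and sub: "S \<subseteq> Z \<times> W"
    and g: "good S" and z: "z \<in> Z"
  shows "\<exists>w\<in>W. good (insert (z,w) S)"
proof (cases "\<exists>w. (z,w) \<in> S")
  case True
  then obtain w where "(z,w) \<in> S" by blast
  then show ?thesis using sub g by (intro bexI[of _ w]) (auto simp: insert_absorb)
next
  case False
  have inS: "a \<in> Z \<and> b \<in> W" if "(a,b) \<in> S" for a b using sub that by auto
  have gS: "(a = c \<longleftrightarrow> b = d) \<and> (larrow a c \<longleftrightarrow> larrow b d)" if "(a,b) \<in> S" "(c,d) \<in> S" for a b c d
    using g that unfolding good_def by blast
  have un': "norm a = 1 \<and> norm b = 1" if "(a,b) \<in> S" for a b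
    using inS[OF that] dense_unit dZ dW by blast
  have nz': "cr a c \<noteq> 0 \<and> cr b d \<noteq> 0" if "(a,b) \<in> S" "(c,d) \<in> S" "(a,b) \<noteq> (c,d)" for a b c d
  proof -
    have "a \<noteq> c" "b \<noteq> d" using gS[OF that(1,2)] that(3) by auto
    then show ?thesis using dense_cr[OF dZ] dense_cr[OF dW] inS that by blast
  qed
  have pr': "cr a c > 0 \<longleftrightarrow> cr b d > 0" if "(a,b) \<in> S" "(c,d) \<in> S" for a b c d
    using gS[OF that] larrow_cr un'[OF that(1)] un'[OF that(2)] by metis
  have nzz: "norm z = 1" using dense_unit[OF dZ z] .
  have nzz': "cr z a \<noteq> 0" if "(a,b) \<in> S" for a b
    using dense_cr[OF dZ z] inS[OF that] False that by blast
  have "\<exists>p. norm p = 1 \<and> (\<forall>a b. (a,b) \<in> S \<longrightarrow> (cr p b > 0 \<longleftrightarrow> cr z a > 0) \<and> cr p b \<noteq> 0)"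
    using fin un' nz' pr' nzz nzz' by (rule core)
  then obtain p where p: "norm p = 1" "\<forall>a b. (a,b) \<in> S \<longrightarrow> (cr p b > 0 \<longleftrightarrow> cr z a > 0) \<and> cr p b \<noteq> 0"
    by blast
  define Ob where "Ob = \<Inter>((\<lambda>(a,b). {q. if cr z a > 0 then 0 < cr q b else cr q b < 0}) ` S)"
  have oOb: "open Ob" unfolding Ob_def
  proof (rule open_Inter)
    show "finite ((\<lambda>(a,b). {q. if cr z a > 0 then 0 < cr q b else cr q b < 0}) ` S)" using fin by simp
  next
    show "\<forall>T\<in>(\<lambda>(a,b). {q. if cr z a > 0 then 0 < cr q b else cr q b < 0}) ` S. open T"
    proof
      fix T assume "T \<in> (\<lambda>(a,b). {q. if cr z a > 0 then 0 < cr q b else cr q b < 0}) ` S"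
      then obtain a b where T: "T = {q. if cr z a > 0 then 0 < cr q b else cr q b < 0}" by auto
      have "open {q. 0 < cr q b}" unfolding cr_ri by (intro open_Collect_less continuous_intros)
      moreover have "open {q. cr q b < 0}" unfolding cr_ri by (intro open_Collect_less continuous_intros)
      ultimately show "open T" unfolding T
        by (cases "0 < cr z a") simp_all
    qed
  qed
  have pc: "(if cr z a > 0 then 0 < cr p b else cr p b < 0)" if "(a,b)\<in>S" for a b
  proof -
    have "(cr p b > 0 \<longleftrightarrow> cr z a > 0) \<and> cr p b \<noteq> 0" using p(2) that by blast
    then show ?thesis by auto
  qed
  have pOb: "p \<in> Ob" unfolding Ob_def using pc by auto
  have "p \<in> closure W" using dW p(1) unfolding dense_set_def by auto
  then have "Ob \<inter> closure W \<noteq> {}" using pOb by blast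
  then have "Ob \<inter> W \<noteq> {}" using open_Int_closure_eq_empty[OF oOb] by blast
  then obtain w where wOb: "w \<in> Ob" and wW: "w \<in> W" by blast
  have nw: "norm w = 1" using dense_unit[OF dW wW] .
  have wc: "(cr w b > 0 \<longleftrightarrow> cr z a > 0) \<and> cr w b \<noteq> 0" if "(a,b) \<in> S" for a b
  proof -
    have "w \<in> {q. if cr z a > 0 then 0 < cr q b else cr q b < 0}" using wOb that unfolding Ob_def by blast
    then show ?thesis by (cases "cr z a > 0") auto
  qed
  have "good (insert (z,w) S)"
    unfolding good_def
  proof (intro allI impI)
    fix a b c d assume ab: "(a,b) \<in> insert (z,w) S" and cd: "(c,d) \<in> insert (z,w) S"
    have lz: "larrow z z = False" "larrow w w = False" by (simp_all add: larrow_def)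
    have side: "(z = a \<longleftrightarrow> w = b) \<and> (larrow z a \<longleftrightarrow> larrow w b) \<and> (larrow a z \<longleftrightarrow> larrow b w)"
      if s: "(a,b) \<in> S" for a b
    proof -
      have "z \<noteq> a" using False s by blast
      moreover have "w \<noteq> b" using wc[OF s] cr_self by metis
      moreover have "larrow z a \<longleftrightarrow> larrow w b"
        using wc[OF s] larrow_cr nzz nw un'[OF s] by metis
      moreover have "larrow a z \<longleftrightarrow> larrow b w"
      proof -
        have "larrow a z \<longleftrightarrow> cr z a < 0" using larrow_cr[of a z] un'[OF s] nzz cr_anti[of a z] by simp
        also have "\<dots> \<longleftrightarrow> \<not> cr z a > 0" using nzz'[OF s] by auto
        also have "\<dots> \<longleftrightarrow> cr w b < 0" using wc[OF s] by auto
        also have "\<dots> \<longleftrightarrow> larrow b w" using larrow_cr[of b w] un'[OF s] nw cr_anti[of b w] by simp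
        finally show ?thesis .
      qed
      ultimately show ?thesis by simp
    qed
    show "(a = c \<longleftrightarrow> b = d) \<and> (larrow a c \<longleftrightarrow> larrow b d)"
      using ab cd
    proof (elim insertE)
      assume "(a,b) = (z,w)" "(c,d) = (z,w)" then show ?thesis using lz by simp
    next
      assume "(a,b) = (z,w)" "(c,d) \<in> S" then show ?thesis using side by auto
    next
      assume "(a,b) \<in> S" "(c,d) = (z,w)" then show ?thesis using side by auto
    next
      assume "(a,b) \<in> S" "(c,d) \<in> S" then show ?thesis using gS by blast
    qed
  qed
  then show ?thesis using wW by blast
qed

lemma back_step:
  assumes dZ: "dense_set Z" and dW: "dense_set W" and fin: "finite S" and sub: "S \<subseteq> Z \<times> W"
    and g: "good S" and w: "w \<in> W"
  shows "\<exists>z\<in>Z. good (insert (z,w) S)"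
proof -
  have "\<exists>z\<in>Z. good (insert (w,z) (converse S))"
    using forth[OF dW dZ _ _ _ w, of "converse S"] fin sub g good_conv by auto
  then obtain z where "z \<in> Z" "good (insert (w,z) (converse S))" by blast
  moreover have "insert (w,z) (converse S) = converse (insert (z,w) S)" by auto
  ultimately show ?thesis using good_conv by metis
qed

lemma dense_nonempty: "dense_set Z \<Longrightarrow> Z \<noteq> {}"
  unfolding dense_set_def by (metis closure_empty empty_iff mem_sphere_0 norm_one subset_empty)

lemma bf:
  assumes dZ: "dense_set Z" and dW: "dense_set W" and cZ: "countable Z" and cW: "countable W"
    and fin0: "finite S0" and sub0: "S0 \<subseteq> Z \<times> W" and g0: "good S0"
  shows "\<exists>g. bij_betw g Z W \<and> (\<forall>x\<in>Z. \<forall>y\<in>Z. larrow x y \<longleftrightarrow> larrow (g x) (g y)) \<and>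
             (\<forall>a b. (a,b) \<in> S0 \<longrightarrow> g a = b)"
proof -
  define Inv where "Inv S \<longleftrightarrow> finite S \<and> S \<subseteq> Z \<times> W \<and> good S" for S
  define fw where "fw S x = insert (x, SOME w. w \<in> W \<and> good (insert (x,w) S)) S" for S x
  define bw where "bw S y = insert (SOME x. x \<in> Z \<and> good (insert (x,y) S), y) S" for S y
  define ez where "ez = from_nat_into Z"
  define ew where "ew = from_nat_into W"
  have rz: "range ez = Z" using range_from_nat_into[OF dense_nonempty[OF dZ] cZ] ez_def by simp
  have rw: "range ew = W" using range_from_nat_into[OF dense_nonempty[OF dW] cW] ew_def by simp
  have fwI: "Inv (fw S x) \<and> S \<subseteq> fw S x \<and> (\<exists>w. (x,w) \<in> fw S x)" if "Inv S" "x \<in> Z" for S x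
  proof -
    have "\<exists>w. w \<in> W \<and> good (insert (x,w) S)"
      using forth[OF dZ dW _ _ _ that(2)] that(1) unfolding Inv_def by blast
    then have "(SOME w. w \<in> W \<and> good (insert (x,w) S)) \<in> W \<and>
               good (insert (x, SOME w. w \<in> W \<and> good (insert (x,w) S)) S)"
      by (rule someI_ex)
    then show ?thesis using that unfolding Inv_def fw_def by auto
  qed
  have bwI: "Inv (bw S y) \<and> S \<subseteq> bw S y \<and> (\<exists>x. (x,y) \<in> bw S y)" if "Inv S" "y \<in> W" for S y
  proof -
    have "\<exists>x. x \<in> Z \<and> good (insert (x,y) S)"
      using back_step[OF dZ dW _ _ _ that(2)] that(1) unfolding Inv_def by blast
    then have "(SOME x. x \<in> Z \<and> good (insert (x,y) S)) \<in> Z \<and>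
               good (insert (SOME x. x \<in> Z \<and> good (insert (x,y) S), y) S)"
      by (rule someI_ex)
    then show ?thesis using that unfolding Inv_def bw_def by auto
  qed
  define F where "F = rec_nat S0 (\<lambda>n S. bw (fw S (ez n)) (ew n))"
  have F0: "F 0 = S0" and FS: "F (Suc n) = bw (fw (F n) (ez n)) (ew n)" for n
    by (simp_all add: F_def)
  have ezZ: "ez n \<in> Z" for n using rz by auto
  have ewW: "ew n \<in> W" for n using rw by auto
  have invF: "Inv (F n)" for n
  proof (induction n)
    case 0 then show ?case using fin0 sub0 g0 by (simp add: F0 Inv_def)
  next
    case (Suc n)
    then show ?case unfolding FS using fwI[OF Suc ezZ] bwI ewW by blast
  qed
  have stepF: "F n \<subseteq> F (Suc n) \<and> (\<exists>w. (ez n, w) \<in> F (Suc n)) \<and> (\<exists>x. (x, ew n) \<in> F (Suc n))" for n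
  proof -
    have 1: "Inv (fw (F n) (ez n))" "F n \<subseteq> fw (F n) (ez n)" "\<exists>w. (ez n, w) \<in> fw (F n) (ez n)"
      using fwI[OF invF ezZ] by auto
    have 2: "fw (F n) (ez n) \<subseteq> F (Suc n)" "\<exists>x. (x, ew n) \<in> F (Suc n)"
      using bwI[OF 1(1) ewW] unfolding FS by auto
    show ?thesis using 1 2 by blast
  qed
  have monoF: "m \<le> n \<Longrightarrow> F m \<subseteq> F n" for m n
    by (rule lift_Suc_mono_le[of F]) (use stepF in auto)
  define U where "U = (\<Union>n. F n)"
  have Usub: "U \<subseteq> Z \<times> W" using invF unfolding U_def Inv_def by blast
  have gU: "(a = c \<longleftrightarrow> b = d) \<and> (larrow a c \<longleftrightarrow> larrow b d)" if h: "(a,b) \<in> U" "(c,d) \<in> U" for a b c d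
  proof -
    obtain m n where "(a,b) \<in> F m" "(c,d) \<in> F n" using h unfolding U_def by blast
    then have "(a,b) \<in> F (max m n)" "(c,d) \<in> F (max m n)" using monoF by (meson max.cobounded1 max.cobounded2 subsetD)+
    then show ?thesis using invF[of "max m n"] unfolding Inv_def good_def by blast
  qed
  have covZ: "\<exists>y. (x,y) \<in> U" if h: "x \<in> Z" for x
  proof -
    obtain n where "x = ez n" using h rz by auto
    then show ?thesis using stepF[of n] unfolding U_def by blast
  qed
  have covW: "\<exists>x. (x,y) \<in> U" if h: "y \<in> W" for y
  proof -
    obtain n where "y = ew n" using h rw by auto
    then show ?thesis using stepF[of n] unfolding U_def by blast
  qed
  define g where "g x = (SOME y. (x,y) \<in> U)" for x
  have gmem: "(x, g x) \<in> U" if "x \<in> Z" for x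
    unfolding g_def using covZ[OF that] by (rule someI_ex)
  have gfun: "g x = y" if "(x,y) \<in> U" for x y
  proof -
    have "x \<in> Z" using that Usub by auto
    then show ?thesis using gU[OF gmem that] by blast
  qed
  have "bij_betw g Z W"
  proof (rule bij_betw_imageI)
    show "inj_on g Z"
    proof (rule inj_onI)
      fix x y assume "x \<in> Z" "y \<in> Z" "g x = g y"
      then show "x = y" using gU[OF gmem gmem] by metis
    qed
  next
    show "g ` Z = W"
    proof
      show "g ` Z \<subseteq> W" using gmem Usub by auto
      show "W \<subseteq> g ` Z"
      proof
        fix y assume "y \<in> W"
        then obtain x where "(x,y) \<in> U" using covW by blast
        then show "y \<in> g ` Z" using gfun Usub by force
      qed
    qed
  qed
  moreover have "\<forall>x\<in>Z. \<forall>y\<in>Z. larrow x y \<longleftrightarrow> larrow (g x) (g y)"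
    using gU[OF gmem gmem] by blast
  moreover have "\<forall>a b. (a,b) \<in> S0 \<longrightarrow> g a = b"
    using gfun unfolding U_def using F0 by blast
  ultimately show ?thesis by blast
qed

lemma tour:
  assumes "dense_set Z" "x \<in> Z" "y \<in> Z" "x \<noteq> y"
  shows "larrow y x \<longleftrightarrow> \<not> larrow x y"
proof -
  have "cr x y \<noteq> 0" using dense_cr assms by blast
  moreover have "norm x = 1" "norm y = 1" using dense_unit assms by blast+
  ultimately have "larrow y x \<longleftrightarrow> cr x y < 0" "larrow x y \<longleftrightarrow> cr x y > 0"
    using larrow_cr cr_anti[of x y] by simp_all
  then show ?thesis using \<open>cr x y \<noteq> 0\<close> by auto
qed

lemma larrow_irrefl: "\<not> larrow x x" by (simp add: larrow_def)

lemma triangle: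
  assumes dZ: "dense_set Z" and A: "A \<subseteq> Z" and fA: "f ` A \<subseteq> Z" and inj: "inj_on f A"
    and R: "\<forall>x\<in>A. \<forall>y\<in>A. \<forall>z\<in>A. Rrel x y z \<longleftrightarrow> Rrel (f x) (f y) (f z)"
    and x: "x \<in> A" and y: "y \<in> A" and z: "z \<in> A" and d: "x \<noteq> y" "x \<noteq> z" "y \<noteq> z"
  shows "(larrow x y \<longleftrightarrow> larrow (f x) (f y)) \<longleftrightarrow> (larrow x z \<longleftrightarrow> larrow (f x) (f z))"
proof -
  have d': "f x \<noteq> f y" "f x \<noteq> f z" "f y \<noteq> f z" using inj d x y z by (auto dest: inj_onD)
  have Z: "x \<in> Z" "y \<in> Z" "z \<in> Z" "f x \<in> Z" "f y \<in> Z" "f z \<in> Z" using A fA x y z by auto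
  have t1: "larrow y x \<longleftrightarrow> \<not> larrow x y" "larrow z x \<longleftrightarrow> \<not> larrow x z" "larrow z y \<longleftrightarrow> \<not> larrow y z"
    using tour[OF dZ Z(1) Z(2) d(1)] tour[OF dZ Z(1) Z(3) d(2)] tour[OF dZ Z(2) Z(3) d(3)] by simp_all
  have t2: "larrow (f y) (f x) \<longleftrightarrow> \<not> larrow (f x) (f y)" "larrow (f z) (f x) \<longleftrightarrow> \<not> larrow (f x) (f z)"
    "larrow (f z) (f y) \<longleftrightarrow> \<not> larrow (f y) (f z)"
    using tour[OF dZ Z(4) Z(5) d'(1)] tour[OF dZ Z(4) Z(6) d'(2)] tour[OF dZ Z(5) Z(6) d'(3)] by simp_all
  have r: "Rrel x y z \<longleftrightarrow> Rrel (f x) (f y) (f z)" "Rrel y x z \<longleftrightarrow> Rrel (f y) (f x) (f z)"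
    "Rrel z x y \<longleftrightarrow> Rrel (f z) (f x) (f y)"
    using R x y z by blast+
  then have r': "((larrow y x \<and> larrow y z \<and> larrow x z) \<or> (larrow z x \<and> larrow z y \<and> larrow x y)) =
     ((larrow (f y) (f x) \<and> larrow (f y) (f z) \<and> larrow (f x) (f z)) \<or> (larrow (f z) (f x) \<and> larrow (f z) (f y) \<and> larrow (f x) (f y)))"
    "((larrow x y \<and> larrow x z \<and> larrow y z) \<or> (larrow z y \<and> larrow z x \<and> larrow y x)) =
     ((larrow (f x) (f y) \<and> larrow (f x) (f z) \<and> larrow (f y) (f z)) \<or> (larrow (f z) (f y) \<and> larrow (f z) (f x) \<and> larrow (f y) (f x)))"
    "((larrow x z \<and> larrow x y \<and> larrow z y) \<or> (larrow y z \<and> larrow y x \<and> larrow z x)) =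
     ((larrow (f x) (f z) \<and> larrow (f x) (f y) \<and> larrow (f z) (f y)) \<or> (larrow (f y) (f z) \<and> larrow (f y) (f x) \<and> larrow (f z) (f x)))"
    unfolding Rrel_def by simp_all
  show ?thesis using r' t1 t2 by argo
qed

lemma sign_const:
  assumes dZ: "dense_set Z" and A: "A \<subseteq> Z" and fA: "f ` A \<subseteq> Z" and inj: "inj_on f A"
    and R: "\<forall>x\<in>A. \<forall>y\<in>A. \<forall>z\<in>A. Rrel x y z \<longleftrightarrow> Rrel (f x) (f y) (f z)"
  shows "(\<forall>x\<in>A. \<forall>y\<in>A. larrow x y \<longleftrightarrow> larrow (f x) (f y)) \<or>
         (\<forall>x\<in>A. \<forall>y\<in>A. larrow x y \<longleftrightarrow> larrow (f y) (f x))"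
proof -
  define s where "s x y \<longleftrightarrow> (larrow x y \<longleftrightarrow> larrow (f x) (f y))" for x y
  have tri: "s x y = s x z" if "x \<in> A" "y \<in> A" "z \<in> A" "x \<noteq> y" "x \<noteq> z" for x y z
  proof (cases "y = z")
    case True then show ?thesis by simp
  next
    case False
    then show ?thesis unfolding s_def using triangle[OF dZ A fA inj R that(1,2,3) that(4,5) False] by blast
  qed
  have sym: "s x y = s y x" if "x \<in> A" "y \<in> A" "x \<noteq> y" for x y
  proof -
    have "f x \<noteq> f y" using inj that by (auto dest: inj_onD)
    moreover have "x \<in> Z" "y \<in> Z" "f x \<in> Z" "f y \<in> Z" using that A fA by auto
    ultimately show ?thesis unfolding s_def using tour[OF dZ \<open>x\<in>Z\<close> \<open>y\<in>Z\<close> that(3)]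
      tour[OF dZ \<open>f x\<in>Z\<close> \<open>f y\<in>Z\<close>] by simp
  qed
  have all: "s x y = s u v" if "x \<in> A" "y \<in> A" "u \<in> A" "v \<in> A" "x \<noteq> y" "u \<noteq> v" for x y u v
  proof (cases "x = u")
    case True
    show ?thesis
    proof (cases "y = v")
      case True then show ?thesis using \<open>x = u\<close> by simp
    next
      case False then show ?thesis using tri[OF that(1,2,4,5)] that \<open>x = u\<close> by simp
    qed
  next
    case False
    have "s x y = s x u"
    proof (cases "y = u")
      case True then show ?thesis by simp
    next
      case ne: False then show ?thesis using tri[OF that(1,2,3,5) False] by simp
    qed
    also have "\<dots> = s u x" using sym[OF that(1,3) False] .
    also have "\<dots> = s u v"
    proof (cases "x = v")
      case True then show ?thesis by simp
    next
      case ne: False then show ?thesis using tri[OF that(3,1,4)] False that(6) by simp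
    qed
    finally show ?thesis .
  qed
  show ?thesis
  proof (cases "\<exists>x\<in>A. \<exists>y\<in>A. x \<noteq> y \<and> s x y")
    case True
    then obtain x0 y0 where h: "x0 \<in> A" "y0 \<in> A" "x0 \<noteq> y0" "s x0 y0" by blast
    have "larrow x y \<longleftrightarrow> larrow (f x) (f y)" if "x \<in> A" "y \<in> A" for x y
    proof (cases "x = y")
      case True then show ?thesis by (simp add: larrow_irrefl)
    next
      case False then show ?thesis using all[OF that h(1,2) False h(3)] h(4) unfolding s_def by blast
    qed
    then show ?thesis by blast
  next
    case False
    have "larrow x y \<longleftrightarrow> larrow (f y) (f x)" if "x \<in> A" "y \<in> A" for x y
    proof (cases "x = y")
      case True then show ?thesis by (simp add: larrow_irrefl)
    next
      case ne: False
      have "f x \<noteq> f y" using inj that ne by (auto dest: inj_onD)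
      moreover have "\<not> s x y" using False that ne by blast
      moreover have "x \<in> Z" "y \<in> Z" "f x \<in> Z" "f y \<in> Z" using that A fA by auto
      ultimately show ?thesis unfolding s_def using tour[OF dZ \<open>f x\<in>Z\<close> \<open>f y\<in>Z\<close>] by simp
    qed
    then show ?thesis by blast
  qed
qed

lemma H_imp_aut:
  assumes "in_H Z g" shows "autR Z g"
proof -
  have b: "bij_betw g Z Z" using assms unfolding in_H_def by blast
  from assms consider (p) "\<forall>x\<in>Z. \<forall>y\<in>Z. x \<noteq> y \<longrightarrow> (larrow x y \<longleftrightarrow> larrow (g x) (g y))"
      | (r) "\<forall>x\<in>Z. \<forall>y\<in>Z. x \<noteq> y \<longrightarrow> (larrow x y \<longleftrightarrow> larrow (g y) (g x))"
    unfolding in_H_def by blast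
  then have "\<forall>x\<in>Z. \<forall>y\<in>Z. \<forall>z\<in>Z. Rrel x y z \<longleftrightarrow> Rrel (g x) (g y) (g z)"
  proof cases
    case p
    have q: "larrow x y \<longleftrightarrow> larrow (g x) (g y)" if "x \<in> Z" "y \<in> Z" for x y
    proof (cases "x = y")
      case True then show ?thesis by (simp add: larrow_irrefl)
    next
      case False then show ?thesis using p that by blast
    qed
    show ?thesis
    proof (intro ballI)
      fix x y z assume h: "x \<in> Z" "y \<in> Z" "z \<in> Z"
      show "Rrel x y z \<longleftrightarrow> Rrel (g x) (g y) (g z)"
        unfolding Rrel_def using q[OF h(1) h(2)] q[OF h(2) h(1)] q[OF h(1) h(3)] q[OF h(3) h(1)]
          q[OF h(2) h(3)] q[OF h(3) h(2)] by simp
    qed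
  next
    case r
    have q: "larrow x y \<longleftrightarrow> larrow (g y) (g x)" if "x \<in> Z" "y \<in> Z" for x y
    proof (cases "x = y")
      case True then show ?thesis by (simp add: larrow_irrefl)
    next
      case False then show ?thesis using r that by blast
    qed
    show ?thesis
    proof (intro ballI)
      fix x y z assume h: "x \<in> Z" "y \<in> Z" "z \<in> Z"
      show "Rrel x y z \<longleftrightarrow> Rrel (g x) (g y) (g z)"
        unfolding Rrel_def using q[OF h(1) h(2)] q[OF h(2) h(1)] q[OF h(1) h(3)] q[OF h(3) h(1)]
          q[OF h(2) h(3)] q[OF h(3) h(2)] by auto
    qed
  qed
  then show ?thesis using b unfolding autR_def by blast
qed

lemma aut_imp_H:
  assumes dZ: "dense_set Z" and a: "autR Z g" shows "in_H Z g"
proof -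
  have b: "bij_betw g Z Z" using a unfolding autR_def by blast
  have "(\<forall>x\<in>Z. \<forall>y\<in>Z. larrow x y \<longleftrightarrow> larrow (g x) (g y)) \<or>
         (\<forall>x\<in>Z. \<forall>y\<in>Z. larrow x y \<longleftrightarrow> larrow (g y) (g x))"
    apply (rule sign_const[OF dZ])
    using b a unfolding autR_def by (auto simp: bij_betw_def)
  then show ?thesis using b unfolding in_H_def by blast
qed

lemma larrow_cnj:
  assumes "norm x = 1" "norm y = 1"
  shows "larrow (cnj x) (cnj y) \<longleftrightarrow> larrow y x"
  using larrow_cr[of "cnj x" "cnj y"] larrow_cr[of y x] assms cr_cnj by simp

lemma dense_cnj:
  assumes dZ: "dense_set Z" shows "dense_set (cnj ` Z)"
  unfolding dense_set_def
proof (intro conjI)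
  show "cnj ` Z \<subseteq> sphere 0 1" using dZ unfolding dense_set_def by auto
  show "sphere 0 1 \<subseteq> closure (cnj ` Z)"
  proof
    fix q :: complex assume "q \<in> sphere 0 1"
    then have "cnj q \<in> closure Z" using dZ unfolding dense_set_def by auto
    moreover have "cnj ` closure Z \<subseteq> closure (cnj ` Z)"
      by (rule image_closure_subset) (auto intro: continuous_intros closure_subset[THEN subsetD])
    ultimately show "q \<in> closure (cnj ` Z)" by (metis complex_cnj_cnj image_eqI subsetD)
  qed
  show "\<forall>x\<in>cnj ` Z. - x \<notin> cnj ` Z"
  proof clarify
    fix a b assume "a \<in> Z" "b \<in> Z" "- cnj a = cnj b"
    then have "b = - a" by (metis complex_cnj_cnj complex_cnj_minus)
    then show False using dZ \<open>a \<in> Z\<close> \<open>b \<in> Z\<close> unfolding dense_set_def by blast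
  qed
qed

theorem lemma3p12:
  fixes Z :: "complex set"
  assumes "countable Z"
    and "Z \<subseteq> sphere 0 1"
    and "sphere 0 1 \<subseteq> closure Z"
    and "\<And>x. x \<in> Z \<Longrightarrow> - x \<notin> Z"
  shows "(\<forall>g. in_H Z g \<longleftrightarrow> autR Z g) \<and>
         (\<forall>A f. finite A \<and> A \<subseteq> Z \<and> inj_on f A \<and> f ` A \<subseteq> Z \<and>
              (\<forall>x\<in>A. \<forall>y\<in>A. \<forall>z\<in>A. Rrel x y z \<longleftrightarrow> Rrel (f x) (f y) (f z))
            \<longrightarrow> (\<exists>g. autR Z g \<and> (\<forall>x\<in>A. g x = f x)))"
proof -
  have dZ: "dense_set Z" using assms unfolding dense_set_def by blast
  have part1: "\<forall>g. in_H Z g \<longleftrightarrow> autR Z g"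
    using H_imp_aut aut_imp_H[OF dZ] by blast
  have part2: "\<exists>g. autR Z g \<and> (\<forall>x\<in>A. g x = f x)"
    if fin: "finite A" and AZ: "A \<subseteq> Z" and inj: "inj_on f A" and fA: "f ` A \<subseteq> Z"
      and R: "\<forall>x\<in>A. \<forall>y\<in>A. \<forall>z\<in>A. Rrel x y z \<longleftrightarrow> Rrel (f x) (f y) (f z)" for A f
  proof -
    have unitZ: "norm x = 1" if "x \<in> Z" for x using dense_unit[OF dZ that] .
    from sign_const[OF dZ AZ fA inj R]
    show ?thesis
    proof
      assume pres: "\<forall>x\<in>A. \<forall>y\<in>A. larrow x y \<longleftrightarrow> larrow (f x) (f y)"
      define S0 where "S0 = (\<lambda>x. (x, f x)) ` A"
      have gS0: "good S0" unfolding good_def S0_def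
      proof (intro allI impI)
        fix a b c d assume h: "(a,b) \<in> (\<lambda>x. (x, f x)) ` A" "(c,d) \<in> (\<lambda>x. (x, f x)) ` A"
        then obtain a' c' where a': "a' \<in> A" "a = a'" "b = f a'" and c': "c' \<in> A" "c = c'" "d = f c'"
          by auto
        have "a = c \<longleftrightarrow> b = d" using a' c' inj by (auto dest: inj_onD)
        moreover have "larrow a c \<longleftrightarrow> larrow b d" using a' c' pres[rule_format, OF a'(1) c'(1)] by simp
        ultimately show "(a = c \<longleftrightarrow> b = d) \<and> (larrow a c \<longleftrightarrow> larrow b d)" by blast
      qed
      have fS0: "finite S0" and sS0: "S0 \<subseteq> Z \<times> Z" using fin AZ fA by (auto simp: S0_def)
      have "\<exists>g. bij_betw g Z Z \<and> (\<forall>x\<in>Z. \<forall>y\<in>Z. larrow x y \<longleftrightarrow> larrow (g x) (g y)) \<and>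
             (\<forall>a b. (a,b) \<in> S0 \<longrightarrow> g a = b)"
        by (rule bf[OF dZ dZ assms(1) assms(1) fS0 sS0 gS0])
      then obtain g where g: "bij_betw g Z Z" "\<forall>x\<in>Z. \<forall>y\<in>Z. larrow x y \<longleftrightarrow> larrow (g x) (g y)"
        "\<forall>a b. (a,b) \<in> S0 \<longrightarrow> g a = b"
        by (elim exE conjE)
      have "in_H Z g" unfolding in_H_def using g by blast
      then have "autR Z g" by (rule H_imp_aut)
      moreover have "\<forall>x\<in>A. g x = f x" using g(3) unfolding S0_def by blast
      ultimately show ?thesis by blast
    next
      assume rev: "\<forall>x\<in>A. \<forall>y\<in>A. larrow x y \<longleftrightarrow> larrow (f y) (f x)"
      define W where "W = cnj ` Z"
      have dW: "dense_set W" unfolding W_def by (rule dense_cnj[OF dZ])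
      have cW: "countable W" unfolding W_def using assms(1) by simp
      define S0 where "S0 = (\<lambda>x. (x, cnj (f x))) ` A"
      have lc: "larrow (cnj (f x)) (cnj (f y)) \<longleftrightarrow> larrow (f y) (f x)" if "x \<in> A" "y \<in> A" for x y
      proof -
        have "f x \<in> Z" "f y \<in> Z" using fA that by auto
        then show ?thesis using larrow_cnj[OF unitZ unitZ] by blast
      qed
      have gS0: "good S0" unfolding good_def S0_def
      proof (intro allI impI)
        fix a b c d assume h: "(a,b) \<in> (\<lambda>x. (x, cnj (f x))) ` A" "(c,d) \<in> (\<lambda>x. (x, cnj (f x))) ` A"
        then obtain a' c' where a': "a' \<in> A" "a = a'" "b = cnj (f a')" and c': "c' \<in> A" "c = c'" "d = cnj (f c')"
          by auto
        have "a = c \<longleftrightarrow> b = d" using a' c' inj by (auto dest: inj_onD)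
        moreover have "larrow a c \<longleftrightarrow> larrow b d" using a' c' rev[rule_format, OF a'(1) c'(1)] lc[OF a'(1) c'(1)] by simp
        ultimately show "(a = c \<longleftrightarrow> b = d) \<and> (larrow a c \<longleftrightarrow> larrow b d)" by blast
      qed
      have fS0: "finite S0" and sS0: "S0 \<subseteq> Z \<times> W" using fin AZ fA by (auto simp: S0_def W_def)
      have "\<exists>h. bij_betw h Z W \<and> (\<forall>x\<in>Z. \<forall>y\<in>Z. larrow x y \<longleftrightarrow> larrow (h x) (h y)) \<and>
             (\<forall>a b. (a,b) \<in> S0 \<longrightarrow> h a = b)"
        by (rule bf[OF dZ dW assms(1) cW fS0 sS0 gS0])
      then obtain h where h: "bij_betw h Z W" "\<forall>x\<in>Z. \<forall>y\<in>Z. larrow x y \<longleftrightarrow> larrow (h x) (h y)"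
        "\<forall>a b. (a,b) \<in> S0 \<longrightarrow> h a = b"
        by (elim exE conjE)
      define g where "g x = cnj (h x)" for x
      have bc: "bij_betw cnj W Z" unfolding W_def
        by (rule bij_betw_imageI) (auto simp: inj_on_def image_image)
      have "bij_betw g Z Z" unfolding g_def using bij_betw_trans[OF h(1) bc] by (simp add: comp_def)
      moreover have "\<forall>x\<in>Z. \<forall>y\<in>Z. x \<noteq> y \<longrightarrow> (larrow x y \<longleftrightarrow> larrow (g y) (g x))"
      proof (intro ballI impI)
        fix x y assume "x \<in> Z" "y \<in> Z" "x \<noteq> y"
        have hW: "h x \<in> W" "h y \<in> W" using h(1) \<open>x \<in> Z\<close> \<open>y \<in> Z\<close> bij_betwE by blast+
        have "norm (h x) = 1" "norm (h y) = 1" using dense_unit[OF dW] hW by blast+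
        then show "larrow x y \<longleftrightarrow> larrow (g y) (g x)"
          unfolding g_def using larrow_cnj h(2) \<open>x \<in> Z\<close> \<open>y \<in> Z\<close> by simp
      qed
      ultimately have "in_H Z g" unfolding in_H_def by blast
      then have "autR Z g" by (rule H_imp_aut)
      moreover have "\<forall>x\<in>A. g x = f x"
      proof
        fix x assume "x \<in> A"
        then have "(x, cnj (f x)) \<in> S0" unfolding S0_def by blast
        then have "h x = cnj (f x)" using h(3) by blast
        then show "g x = f x" unfolding g_def by simp
      qed
      ultimately show ?thesis by blast
    qed
  qed
  show ?thesis
  proof (intro conjI allI impI)
    show "in_H Z g \<longleftrightarrow> autR Z g" for g using part1 by blast
  next
    fix A f
    assume "finite A \<and> A \<subseteq> Z \<and> inj_on f A \<and> f ` A \<subseteq> Z \<and>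
              (\<forall>x\<in>A. \<forall>y\<in>A. \<forall>z\<in>A. Rrel x y z \<longleftrightarrow> Rrel (f x) (f y) (f z))"
    then show "\<exists>g. autR Z g \<and> (\<forall>x\<in>A. g x = f x)" by (intro part2) auto
  qed
qed

end
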